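(* Let $G$ be an abelian group and $B=\bigoplus_{i\in G}B_i$ a $G$-graded integral domain containing $\mathbb{Q}$. Suppose $d\in G$ has infinite order and $D:B^{(d)}\to B^{(d)}$ is a nonzero homogeneous locally nilpotent derivation with $\ker D\not\subseteq B_0$. Then some element of $D(B^{(d)})\cap\ker(D)$ is a cylindrical element of $B$.
   Context: $B^{(d)}=\bigoplus_{i\in\langle d\rangle}B_i$, where $\langle d\rangle$ is the subgroup generated by $d$. A derivation is homogeneous if it shifts degrees by a fixed element of the group; locally nilpotent if every element is killed by some power. For nonzero homogeneous $f$, $B_{(f)}$ is the degree-$0$ subring of $B_f=S^{-1}B$, $S=\{1,f,f^2,\dots\}$. A ring is a polynomial ring in one variable if it is a polynomial ring in one variable over some subring (zero ring counts). For a $G$-graded ring $B$, an element $f$ is cylindrical if it is nonzero and homogeneous, $\deg(f)\in G$ has infinite order, and $B_{(f)}$ is a polynomial ring in one variable. *)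

theory Defs
  imports Main "HOL-Computational_Algebra.Fraction_Field" "HOL-Computational_Algebra.Polynomial"
begin

text \<open>The ring B is the whole type 'b (an integral domain); the grading is a family
  Bc :: 'g => 'b set of homogeneous components.\<close>

fun nmul :: "nat \<Rightarrow> 'g::ab_group_add \<Rightarrow> 'g" where
  "nmul 0 g = 0"
| "nmul (Suc n) g = g + nmul n g"

definition zmul :: "int \<Rightarrow> 'g::ab_group_add \<Rightarrow> 'g" where
  "zmul k g = (if 0 \<le> k then nmul (nat k) g else - nmul (nat (- k)) g)"

definition cyclic_subgroup :: "'g::ab_group_add \<Rightarrow> 'g set" where
  "cyclic_subgroup d = range (\<lambda>k. zmul k d)"

definition infinite_order :: "'g::ab_group_add \<Rightarrow> bool" where
  "infinite_order g \<longleftrightarrow> (\<forall>n>0. nmul n g \<noteq> 0)"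

definition graded_ring :: "('g::ab_group_add \<Rightarrow> 'b::comm_ring_1 set) \<Rightarrow> bool" where
  "graded_ring Bc \<longleftrightarrow>
     (\<forall>i. 0 \<in> Bc i \<and> (\<forall>x\<in>Bc i. \<forall>y\<in>Bc i. x + y \<in> Bc i) \<and> (\<forall>x\<in>Bc i. - x \<in> Bc i)) \<and>
     (\<forall>i j x y. x \<in> Bc i \<longrightarrow> y \<in> Bc j \<longrightarrow> x * y \<in> Bc (i + j)) \<and>
     (\<forall>x. \<exists>!c. (\<forall>i. c i \<in> Bc i) \<and> finite {i. c i \<noteq> 0} \<and> x = (\<Sum>i\<in>{i. c i \<noteq> 0}. c i))"

definition veronese :: "('g::ab_group_add \<Rightarrow> 'b::comm_ring_1 set) \<Rightarrow> 'g \<Rightarrow> 'b set" where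
  "veronese Bc d = {x. \<exists>c. (\<forall>i. c i \<in> Bc i) \<and> finite {i. c i \<noteq> 0} \<and>
       {i. c i \<noteq> 0} \<subseteq> cyclic_subgroup d \<and> x = (\<Sum>i\<in>{i. c i \<noteq> 0}. c i)}"

definition homogeneous :: "('g \<Rightarrow> 'b set) \<Rightarrow> 'b \<Rightarrow> bool" where
  "homogeneous Bc x \<longleftrightarrow> (\<exists>i. x \<in> Bc i)"

definition derivation_on :: "'b::comm_ring_1 set \<Rightarrow> ('b \<Rightarrow> 'b) \<Rightarrow> bool" where
  "derivation_on R D \<longleftrightarrow> (\<forall>x\<in>R. D x \<in> R) \<and>
     (\<forall>x\<in>R. \<forall>y\<in>R. D (x + y) = D x + D y) \<and>
     (\<forall>x\<in>R. \<forall>y\<in>R. D (x * y) = x * D y + y * D x)"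

definition homogeneous_derivation_on :: "('g::ab_group_add \<Rightarrow> 'b::comm_ring_1 set) \<Rightarrow> 'g \<Rightarrow> ('b \<Rightarrow> 'b) \<Rightarrow> bool" where
  "homogeneous_derivation_on Bc d D \<longleftrightarrow> derivation_on (veronese Bc d) D \<and>
     (\<exists>e. \<forall>i\<in>cyclic_subgroup d. \<forall>x\<in>Bc i. D x \<in> Bc (i + e))"

definition locally_nilpotent_on :: "'b::zero set \<Rightarrow> ('b \<Rightarrow> 'b) \<Rightarrow> bool" where
  "locally_nilpotent_on R D \<longleftrightarrow> (\<forall>x\<in>R. \<exists>n. (D ^^ n) x = 0)"

text \<open>B_(f): degree-0 part of B_f, realised inside the fraction field of B:
  elements b/f^n with b homogeneous of degree n*deg f.\<close>
definition degree0_localization :: "('g::ab_group_add \<Rightarrow> 'b::idom set) \<Rightarrow> 'g \<Rightarrow> 'b \<Rightarrow> 'b fract set" where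
  "degree0_localization Bc i f = {Fraction_Field.Fract b (f ^ n) | b n. b \<in> Bc (nmul n i)}"

definition is_subring :: "'a::comm_ring_1 set \<Rightarrow> bool" where
  "is_subring S \<longleftrightarrow> 0 \<in> S \<and> 1 \<in> S \<and> (\<forall>x\<in>S. \<forall>y\<in>S. x + y \<in> S \<and> x * y \<in> S) \<and> (\<forall>x\<in>S. - x \<in> S)"

definition polynomial_ring_one_var :: "'a::comm_ring_1 set \<Rightarrow> bool" where
  "polynomial_ring_one_var R \<longleftrightarrow> (\<exists>A t. is_subring A \<and> A \<subseteq> R \<and> t \<in> R \<and>
     bij_betw (\<lambda>p. poly p t) {p. \<forall>k. coeff p k \<in> A} R)"

definition cylindrical :: "('g::ab_group_add \<Rightarrow> 'b::idom set) \<Rightarrow> 'b \<Rightarrow> bool" where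
  "cylindrical Bc f \<longleftrightarrow> f \<noteq> 0 \<and>
     (\<exists>i. f \<in> Bc i \<and> infinite_order i \<and> polynomial_ring_one_var (degree0_localization Bc i f))"

end

theory Submission
  imports Defs
begin


lemma nmul_add: "nmul (m + n) g = nmul m g + nmul n g"
  by (induction m) (simp_all add: add.assoc)

lemma zmul_0[simp]: "zmul 0 g = 0" by (simp add: zmul_def)
lemma zmul_nat: "zmul (int n) g = nmul n g" by (simp add: zmul_def)

lemma zmul_succ: "zmul (k + 1) g = zmul k g + g"
proof (cases "k \<ge> 0")
  case True
  then have "nat (k+1) = Suc (nat k)" by simp
  then show ?thesis using True by (simp add: zmul_def add.commute)
next
  case False
  show ?thesis
  proof (cases "k = -1")
    case True then show ?thesis by (simp add: zmul_def)
  next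
    case F2: False
    with False have "nat (-k) = Suc (nat (-(k+1)))" by simp
    then show ?thesis using False F2 by (simp add: zmul_def)
  qed
qed

lemma zmul_pred: "zmul (k - 1) g = zmul k g - g"
  using zmul_succ[of "k - 1" g] by (simp add: algebra_simps)

lemma zmul_add: "zmul (a + b) g = zmul a g + zmul b g"
proof (induction b rule: int_induct[where k=0])
  case base then show ?case by simp
next
  case (step1 i) then show ?case using zmul_succ[of "a+i" g] zmul_succ[of i g]
    by (simp add: add.assoc[symmetric])
next
  case (step2 i)
  have h1: "zmul (a + (i - 1)) g = zmul (a+i) g - g" using zmul_pred[of "a+i" g] by (simp add: algebra_simps)
  have h2: "zmul (i - 1) g = zmul i g - g" by (rule zmul_pred)
  show ?case unfolding h1 h2 step2(2) by (rule add_diff_eq[symmetric])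
qed

lemma zmul_neg: "zmul (- a) g = - zmul a g"
  using zmul_add[of "-a" a g] by (simp add: eq_neg_iff_add_eq_0)

lemma zmul_diff: "zmul (a - b) g = zmul a g - zmul b g"
  using zmul_add[of a "-b" g] zmul_neg[of b g] by simp

lemma zmul_one[simp]: "zmul 1 g = g"
  using zmul_succ[of 0 g] by simp

lemma zmul_mult: "zmul (a * b) g = zmul a (zmul b g)"
proof (induction a rule: int_induct[where k=0])
  case base then show ?case by simp
next
  case (step1 i) then show ?case using zmul_succ[of i "zmul b g"]
    by (simp add: distrib_right zmul_add)
next
  case (step2 i) then show ?case using zmul_pred[of i "zmul b g"]
    by (simp add: left_diff_distrib zmul_diff)
qed

lemma nmul_zmul: "nmul n (zmul k g) = zmul (int n * k) g"
  by (simp add: zmul_mult zmul_nat)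

lemma zmul_inj:
  assumes "infinite_order d" "zmul a d = zmul b d" shows "a = b"
proof (rule ccontr)
  assume "a \<noteq> b"
  have z: "zmul (a - b) d = 0" using assms(2) by (simp add: zmul_diff)
  show False
  proof (cases "a - b > 0")
    case True
    then have "nmul (nat (a-b)) d = 0" using z by (simp add: zmul_def)
    moreover have "nat (a-b) > 0" using True by simp
    ultimately show False using assms(1) unfolding infinite_order_def by blast
  next
    case False
    then have "nmul (nat (-(a-b))) d = 0" using z \<open>a \<noteq> b\<close> by (simp add: zmul_def)
    moreover have "nat (-(a-b)) > 0" using False \<open>a \<noteq> b\<close> by simp
    ultimately show False using assms(1) unfolding infinite_order_def by blast
  qed
qed

lemma zmul_inf_order:
  assumes "infinite_order d" "k \<noteq> 0" shows "infinite_order (zmul k d)"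
  unfolding infinite_order_def
proof (intro allI impI)
  fix n :: nat assume "n > 0"
  then have "int n * k \<noteq> 0" using assms(2) by simp
  then show "nmul n (zmul k d) \<noteq> 0"
    using zmul_inj[OF assms(1), of "int n * k" 0] by (auto simp: nmul_zmul)
qed



locale gr =
  fixes Bc :: "'g::ab_group_add \<Rightarrow> 'b::idom set"
  assumes graded: "graded_ring Bc"
begin

lemma g1: "\<forall>i. 0 \<in> Bc i \<and> (\<forall>x\<in>Bc i. \<forall>y\<in>Bc i. x + y \<in> Bc i) \<and> (\<forall>x\<in>Bc i. - x \<in> Bc i)"
  using graded unfolding graded_ring_def by (rule conjunct1)
lemma g2: "\<forall>i j x y. x \<in> Bc i \<longrightarrow> y \<in> Bc j \<longrightarrow> x * y \<in> Bc (i + j)"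
  using graded unfolding graded_ring_def by (rule conjunct1[OF conjunct2])
lemma ex1: "\<exists>!c. (\<forall>i. c i \<in> Bc i) \<and> finite {i. c i \<noteq> 0} \<and> x = (\<Sum>i\<in>{i. c i \<noteq> 0}. c i)"
  using graded unfolding graded_ring_def by (metis (no_types) conjunct2)

lemma Bc_zero[simp]: "0 \<in> Bc i" using g1 by simp
lemma Bc_add: "x \<in> Bc i \<Longrightarrow> y \<in> Bc i \<Longrightarrow> x + y \<in> Bc i" using g1 by simp
lemma Bc_neg: "x \<in> Bc i \<Longrightarrow> - x \<in> Bc i" using g1 by simp
lemma Bc_diff: "x \<in> Bc i \<Longrightarrow> y \<in> Bc i \<Longrightarrow> x - y \<in> Bc i"
  unfolding diff_conv_add_uminus by (rule Bc_add[OF _ Bc_neg])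
lemma Bc_mult: "x \<in> Bc i \<Longrightarrow> y \<in> Bc j \<Longrightarrow> x * y \<in> Bc (i + j)" using g2 by simp
lemma Bc_mult': "x \<in> Bc i \<Longrightarrow> y \<in> Bc j \<Longrightarrow> k = i + j \<Longrightarrow> x * y \<in> Bc k" using Bc_mult by blast
lemma Bc_sum: "finite S \<Longrightarrow> (\<And>s. s \<in> S \<Longrightarrow> f s \<in> Bc i) \<Longrightarrow> sum f S \<in> Bc i"
  by (induction S rule: finite_induct) (auto intro: Bc_add)

lemma decomp: "\<exists>c. (\<forall>i. c i \<in> Bc i) \<and> finite {i. c i \<noteq> 0} \<and> x = (\<Sum>i\<in>{i. c i \<noteq> 0}. c i)"
  using ex1[of x] by (rule ex1_implies_ex)

lemma uniq:
  assumes "\<forall>i. c i \<in> Bc i" "finite {i. c i \<noteq> 0}" "x = (\<Sum>i\<in>{i. c i \<noteq> 0}. c i)"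
    "\<forall>i. c' i \<in> Bc i" "finite {i. c' i \<noteq> 0}" "x = (\<Sum>i\<in>{i. c' i \<noteq> 0}. c' i)"
  shows "c = c'"
proof -
  let ?P = "\<lambda>c. (\<forall>i. c i \<in> Bc i) \<and> finite {i. c i \<noteq> 0} \<and> x = (\<Sum>i\<in>{i. c i \<noteq> 0}. c i)"
  have p1: "?P c" by (intro conjI; fact)
  have p2: "?P c'" by (intro conjI; fact)
  from ex1[of x, unfolded Ex1_def] obtain c0 where "?P c0" "\<forall>y. ?P y \<longrightarrow> y = c0" by (elim exE conjE) blast
  then have "c = c0" "c' = c0" using p1 p2 by (simp_all only: simp_thms)
  then show ?thesis by simp
qed

lemma core:
  assumes S: "finite S" and inj: "inj_on \<sigma> S" and mem: "\<And>i. i \<in> S \<Longrightarrow> c i \<in> Bc (\<sigma> i)"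
    and sum0: "(\<Sum>i\<in>S. c i) = 0" and iS: "i \<in> S"
  shows "c i = 0"
proof -
  define c' where "c' l = (if l \<in> \<sigma> ` S then c (the_inv_into S \<sigma> l) else 0)" for l
  have c'\<sigma>: "c' (\<sigma> j) = c j" if "j \<in> S" for j
    using that inj by (simp add: c'_def the_inv_into_f_f)
  have m: "\<forall>l. c' l \<in> Bc l"
  proof
    fix l show "c' l \<in> Bc l"
    proof (cases "l \<in> \<sigma> ` S")
      case True then obtain j where "j \<in> S" "l = \<sigma> j" by blast
      then show ?thesis using c'\<sigma> mem by simp
    qed (simp add: c'_def)
  qed
  have sub: "{l. c' l \<noteq> 0} \<subseteq> \<sigma> ` S" by (auto simp: c'_def split: if_splits)
  have fin: "finite {l. c' l \<noteq> 0}" using finite_subset[OF sub] S by blast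
  have "(\<Sum>l\<in>{l. c' l \<noteq> 0}. c' l) = (\<Sum>l\<in>\<sigma> ` S. c' l)"
    by (rule sum.mono_neutral_left) (use S sub in auto)
  also have "\<dots> = (\<Sum>j\<in>S. c' (\<sigma> j))" by (rule sum.reindex[OF inj, unfolded comp_def])
  also have "\<dots> = (\<Sum>j\<in>S. c j)" by (rule sum.cong) (simp_all add: c'\<sigma>)
  finally have e: "0 = (\<Sum>l\<in>{l. c' l \<noteq> 0}. c' l)" using sum0 by simp
  have "c' = (\<lambda>_. 0)"
    by (rule uniq[OF m fin e, of "\<lambda>_. 0"]) simp_all
  then show ?thesis using c'\<sigma>[OF iS] by (metis)
qed

lemma hom_rep:
  assumes "x \<in> Bc i" "x \<noteq> 0" "\<forall>j. c j \<in> Bc j" "finite {j. c j \<noteq> 0}" "x = (\<Sum>j\<in>{j. c j \<noteq> 0}. c j)"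
  shows "c = (\<lambda>j. if j = i then x else 0)"
proof (rule uniq[OF assms(3,4,5)])
  show "\<forall>j. (if j = i then x else 0) \<in> Bc j" using assms(1) by simp
  have "{j. (if j = i then x else 0) \<noteq> 0} = {i}" using assms(2) by auto
  then show "finite {j. (if j = i then x else (0::'b)) \<noteq> 0}" "x = (\<Sum>j\<in>{j. (if j = i then x else 0) \<noteq> 0}. if j = i then x else 0)"
    by simp_all
qed

lemma deg_unique: "x \<in> Bc i \<Longrightarrow> x \<in> Bc j \<Longrightarrow> x \<noteq> 0 \<Longrightarrow> i = j"
proof -
  assume a: "x \<in> Bc i" "x \<in> Bc j" "x \<noteq> 0"
  obtain c where c: "\<forall>i. c i \<in> Bc i" "finite {i. c i \<noteq> 0}" "x = (\<Sum>i\<in>{i. c i \<noteq> 0}. c i)"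
    using decomp by blast
  have "c = (\<lambda>l. if l = i then x else 0)" "c = (\<lambda>l. if l = j then x else 0)"
    using hom_rep[OF a(1) a(3) c] hom_rep[OF a(2) a(3) c] by simp_all
  then show "i = j" using a(3) by metis
qed

lemma division:
  assumes y: "y \<in> Bc j" "y \<noteq> 0" and xy: "x * y \<in> Bc k"
  shows "x \<in> Bc (k - j)"
proof -
  obtain c where c: "\<forall>i. c i \<in> Bc i" "finite {i. c i \<noteq> 0}" "x = (\<Sum>i\<in>{i. c i \<noteq> 0}. c i)"
    using decomp by blast
  define nz where "nz = {i. c i \<noteq> 0}"
  define S where "S = insert (k - j) nz"
  define e where "e i = c i * y - (if i = k - j then x * y else 0)" for i
  have finS: "finite S" using c(2) by (simp add: S_def nz_def)
  have inj: "inj_on (\<lambda>i. i + j) S" by (simp add: inj_on_def)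
  have mem: "e i \<in> Bc (i + j)" if "i \<in> S" for i
  proof (cases "i = k - j")
    case True then show ?thesis using Bc_mult[OF _ y(1), of "c i" i] c(1) xy
      by (simp add: e_def Bc_diff)
  next
    case False then show ?thesis using Bc_mult[OF _ y(1), of "c i" i] c(1)
      by (simp add: e_def)
  qed
  have sx: "(\<Sum>i\<in>S. c i) = x"
  proof -
    have "(\<Sum>i\<in>S. c i) = (\<Sum>i\<in>nz. c i)"
      by (rule sum.mono_neutral_right) (use finS in \<open>auto simp: S_def nz_def\<close>)
    then show ?thesis using c(3) nz_def by simp
  qed
  have "(\<Sum>i\<in>S. e i) = (\<Sum>i\<in>S. c i * y) - (\<Sum>i\<in>S. (if i = k - j then x * y else 0))"
    by (simp add: e_def sum_subtractf)
  also have "(\<Sum>i\<in>S. (if i = k - j then x * y else 0)) = x * y"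
    using finS by (simp add: sum.delta S_def)
  also have "(\<Sum>i\<in>S. c i * y) = x * y" using sx by (simp add: sum_distrib_right[symmetric])
  finally have s0: "(\<Sum>i\<in>S. e i) = 0" by simp
  have z: "c i = 0" if "i \<in> nz" "i \<noteq> k - j" for i
  proof -
    have "i \<in> S" using that by (simp add: S_def)
    then have "e i = 0" using core[OF finS inj, of e, OF mem s0] by blast
    then show ?thesis using that y(2) by (simp add: e_def)
  qed
  then have "nz \<subseteq> {k - j}" using nz_def by auto
  then have "(\<Sum>i\<in>nz. c i) = (\<Sum>i\<in>{k-j}. c i)"
    by (intro sum.mono_neutral_left) (auto simp: nz_def)
  then have "x = (\<Sum>i\<in>{k-j}. c i)"
    using c(3) nz_def by simp
  then show ?thesis using c(1) by simp
qed

lemma one_Bc0: "1 \<in> Bc 0"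
proof -
  obtain c where c: "\<forall>i. c i \<in> Bc i" "finite {i. c i \<noteq> 0}" "(1::'b) = (\<Sum>i\<in>{i. c i \<noteq> 0}. c i)"
    using decomp by blast
  have "{i. c i \<noteq> 0} \<noteq> {}" using c(3) by (metis one_neq_zero sum.empty)
  then obtain i where "c i \<noteq> 0" by blast
  then have "1 \<in> Bc (i - i)" using division[of "c i" i 1 i] c(1) by simp
  then show ?thesis by simp
qed

lemma of_nat_Bc0: "of_nat n \<in> Bc 0"
  by (induction n) (auto intro: Bc_add[OF one_Bc0])

lemma pow_Bc: "x \<in> Bc i \<Longrightarrow> x ^ n \<in> Bc (nmul n i)"
  by (induction n) (auto simp: one_Bc0 intro: Bc_mult)

end


lemma H_zmul[simp]: "zmul k d \<in> cyclic_subgroup d" by (simp add: cyclic_subgroup_def)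
lemma H_elim: "i \<in> cyclic_subgroup d \<Longrightarrow> \<exists>k. i = zmul k d" by (auto simp: cyclic_subgroup_def)
lemma H_add: "i \<in> cyclic_subgroup d \<Longrightarrow> j \<in> cyclic_subgroup d \<Longrightarrow> i + j \<in> cyclic_subgroup d"
  by (auto simp: cyclic_subgroup_def zmul_add[symmetric])
lemma H_neg: "i \<in> cyclic_subgroup d \<Longrightarrow> - i \<in> cyclic_subgroup d"
  by (auto simp: cyclic_subgroup_def zmul_neg[symmetric])
lemma H_diff: "i \<in> cyclic_subgroup d \<Longrightarrow> j \<in> cyclic_subgroup d \<Longrightarrow> i - j \<in> cyclic_subgroup d"
  by (auto simp: cyclic_subgroup_def zmul_diff[symmetric])
lemma H_0[simp]: "0 \<in> cyclic_subgroup d" using H_zmul[of 0 d] by simp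

locale gv = gr Bc for Bc :: "'g::ab_group_add \<Rightarrow> 'b::idom set" +
  fixes d :: 'g
  assumes dinf: "infinite_order d"
begin

abbreviation "H \<equiv> cyclic_subgroup d"
abbreviation "A \<equiv> veronese Bc d"

lemma Bc_A: assumes "i \<in> H" "x \<in> Bc i" shows "x \<in> A"
proof (cases "x = 0")
  case True
  show ?thesis unfolding veronese_def
    by (rule CollectI, rule exI[of _ "\<lambda>_. 0"]) (simp add: True)
next
  case False
  have e: "{j. (if j = i then x else 0) \<noteq> 0} = {i}" using False by auto
  show ?thesis unfolding veronese_def
    by (rule CollectI, rule exI[of _ "\<lambda>j. if j = i then x else 0"]) (simp add: e assms)
qed

lemma A_decomp: "x \<in> A \<Longrightarrow> \<exists>c. (\<forall>i. c i \<in> Bc i) \<and> finite {i. c i \<noteq> 0} \<and>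
       {i. c i \<noteq> 0} \<subseteq> H \<and> x = (\<Sum>i\<in>{i. c i \<noteq> 0}. c i)"
  by (simp add: veronese_def)

lemma A_0[simp]: "0 \<in> A" using Bc_A[OF H_0 Bc_zero] .
lemma A_1[simp]: "1 \<in> A" using Bc_A[OF H_0 one_Bc0] .

lemma A_add: assumes "x \<in> A" "y \<in> A" shows "x + y \<in> A"
proof -
  obtain c1 where c1: "\<forall>i. c1 i \<in> Bc i" "finite {i. c1 i \<noteq> 0}" "{i. c1 i \<noteq> 0} \<subseteq> H" "x = (\<Sum>i\<in>{i. c1 i \<noteq> 0}. c1 i)"
    using A_decomp[OF assms(1)] by blast
  obtain c2 where c2: "\<forall>i. c2 i \<in> Bc i" "finite {i. c2 i \<noteq> 0}" "{i. c2 i \<noteq> 0} \<subseteq> H" "y = (\<Sum>i\<in>{i. c2 i \<noteq> 0}. c2 i)"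
    using A_decomp[OF assms(2)] by blast
  define U where "U = {i. c1 i \<noteq> 0} \<union> {i. c2 i \<noteq> 0}"
  define c where "c i = c1 i + c2 i" for i
  have finU: "finite U" using c1(2) c2(2) by (simp add: U_def)
  have sub: "{i. c i \<noteq> 0} \<subseteq> U" by (auto simp: c_def U_def)
  have "(\<Sum>i\<in>{i. c i \<noteq> 0}. c i) = (\<Sum>i\<in>U. c i)"
    by (rule sum.mono_neutral_left[OF finU sub]) auto
  also have "\<dots> = (\<Sum>i\<in>U. c1 i) + (\<Sum>i\<in>U. c2 i)" by (simp add: c_def sum.distrib)
  also have "(\<Sum>i\<in>U. c1 i) = x" unfolding c1(4)
    by (rule sum.mono_neutral_right[OF finU]) (auto simp: U_def)
  also have "(\<Sum>i\<in>U. c2 i) = y" unfolding c2(4)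
    by (rule sum.mono_neutral_right[OF finU]) (auto simp: U_def)
  finally have e: "x + y = (\<Sum>i\<in>{i. c i \<noteq> 0}. c i)" by simp
  have "\<forall>i. c i \<in> Bc i" using c1(1) c2(1) by (simp add: c_def Bc_add)
  moreover have "finite {i. c i \<noteq> 0}" using finite_subset[OF sub finU] .
  moreover have "{i. c i \<noteq> 0} \<subseteq> H" using sub c1(3) c2(3) U_def by blast
  ultimately show ?thesis unfolding veronese_def using e by blast
qed

lemma A_sum: "finite S \<Longrightarrow> (\<And>s. s \<in> S \<Longrightarrow> f s \<in> A) \<Longrightarrow> sum f S \<in> A"
  by (induction S rule: finite_induct) (auto intro: A_add)

lemma A_neg: assumes "x \<in> A" shows "- x \<in> A"
proof -
  obtain c1 where c1: "\<forall>i. c1 i \<in> Bc i" "finite {i. c1 i \<noteq> 0}" "{i. c1 i \<noteq> 0} \<subseteq> H" "x = (\<Sum>i\<in>{i. c1 i \<noteq> 0}. c1 i)"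
    using A_decomp[OF assms(1)] by blast
  have "- x = (\<Sum>i\<in>{i. c1 i \<noteq> 0}. - c1 i)" using c1(4) by (simp add: sum_negf)
  also have "\<dots> \<in> A" by (rule A_sum) (use c1 Bc_neg Bc_A in blast)+
  finally show ?thesis .
qed

lemma A_diff: "x \<in> A \<Longrightarrow> y \<in> A \<Longrightarrow> x - y \<in> A"
  unfolding diff_conv_add_uminus by (rule A_add[OF _ A_neg])

lemma A_mult: assumes "x \<in> A" "y \<in> A" shows "x * y \<in> A"
proof -
  obtain c1 where c1: "\<forall>i. c1 i \<in> Bc i" "finite {i. c1 i \<noteq> 0}" "{i. c1 i \<noteq> 0} \<subseteq> H" "x = (\<Sum>i\<in>{i. c1 i \<noteq> 0}. c1 i)"
    using A_decomp[OF assms(1)] by blast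
  obtain c2 where c2: "\<forall>i. c2 i \<in> Bc i" "finite {i. c2 i \<noteq> 0}" "{i. c2 i \<noteq> 0} \<subseteq> H" "y = (\<Sum>i\<in>{i. c2 i \<noteq> 0}. c2 i)"
    using A_decomp[OF assms(2)] by blast
  have "x * y = (\<Sum>i\<in>{i. c1 i \<noteq> 0}. \<Sum>j\<in>{i. c2 i \<noteq> 0}. c1 i * c2 j)"
    unfolding c1(4) c2(4) by (rule sum_product)
  also have "\<dots> \<in> A"
  proof (rule A_sum[OF c1(2)], rule A_sum[OF c2(2)])
    fix i j assume "i \<in> {i. c1 i \<noteq> 0}" "j \<in> {i. c2 i \<noteq> 0}"
    then have "i + j \<in> H" using c1(3) c2(3) H_add by blast
    then show "c1 i * c2 j \<in> A" using Bc_A Bc_mult c1(1) c2(1) by blast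
  qed
  finally show ?thesis .
qed

lemma A_pow: "x \<in> A \<Longrightarrow> x ^ n \<in> A"
  by (induction n) (auto intro: A_mult)

lemma A_of_nat: "of_nat n \<in> A"
  using Bc_A[OF H_0 of_nat_Bc0] .

lemma A_deg: assumes "x \<in> A" "x \<in> Bc i" "x \<noteq> 0" shows "i \<in> H"
proof -
  obtain c1 where c1: "\<forall>i. c1 i \<in> Bc i" "finite {i. c1 i \<noteq> 0}" "{i. c1 i \<noteq> 0} \<subseteq> H" "x = (\<Sum>i\<in>{i. c1 i \<noteq> 0}. c1 i)"
    using A_decomp[OF assms(1)] by blast
  have "c1 = (\<lambda>j. if j = i then x else 0)" using hom_rep[OF assms(2,3) c1(1,2,4)] .
  then have "c1 i \<noteq> 0" using assms(3) by simp
  then show ?thesis using c1(3) by blast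
qed

end


lemma nmul_distrib: "nmul n (a + b) = nmul n a + nmul n b"
  by (induction n) (simp_all add: algebra_simps)

locale ld = gv Bc d for Bc :: "'g::ab_group_add \<Rightarrow> 'b::idom set" and d +
  fixes D :: "'b \<Rightarrow> 'b" and e :: 'g
  assumes der: "derivation_on (veronese Bc d) D"
    and hom: "\<forall>i\<in>cyclic_subgroup d. \<forall>x\<in>Bc i. D x \<in> Bc (i + e)"
    and lnd: "locally_nilpotent_on (veronese Bc d) D"
    and nzD: "\<exists>x\<in>veronese Bc d. D x \<noteq> 0"
    and Qc: "\<forall>n::nat. n \<noteq> 0 \<longrightarrow> (of_nat n :: 'b) dvd 1"
begin

definition K where "K = {x \<in> A. D x = 0}"

lemma D_A: "x \<in> A \<Longrightarrow> D x \<in> A" using der unfolding derivation_on_def by blast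
lemma D_add: "x \<in> A \<Longrightarrow> y \<in> A \<Longrightarrow> D (x + y) = D x + D y" using der unfolding derivation_on_def by blast
lemma D_mult: "x \<in> A \<Longrightarrow> y \<in> A \<Longrightarrow> D (x * y) = x * D y + y * D x" using der unfolding derivation_on_def by blast
lemma D_hom: "i \<in> H \<Longrightarrow> x \<in> Bc i \<Longrightarrow> D x \<in> Bc (i + e)" using hom by blast

lemma D_0[simp]: "D 0 = 0"
proof -
  have "D 0 = D 0 + D 0" using D_add[OF A_0 A_0] by simp
  then show ?thesis by (metis add_cancel_right_right)
qed
lemma D_1[simp]: "D 1 = 0"
proof -
  have "D 1 = D 1 + D 1" using D_mult[OF A_1 A_1] by simp
  then show ?thesis by (metis add_cancel_right_right)
qed
lemma D_neg: "x \<in> A \<Longrightarrow> D (- x) = - D x"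
proof -
  assume x: "x \<in> A"
  have "0 = D (x + - x)" by simp
  also have "\<dots> = D x + D (- x)" by (rule D_add[OF x A_neg[OF x]])
  then have "D x + D (- x) = 0" by simp
  from minus_unique[OF this] show ?thesis by simp
qed
lemma D_diff: "x \<in> A \<Longrightarrow> y \<in> A \<Longrightarrow> D (x - y) = D x - D y"
  using D_add[OF _ A_neg, of x y] D_neg[of y] by simp
lemma D_of_nat[simp]: "D (of_nat n) = 0"
  by (induction n) (simp_all add: D_add[OF A_1 A_of_nat])

lemma ofnat_nz: assumes "n \<noteq> 0" shows "(of_nat n :: 'b) \<noteq> 0"
proof
  assume "(of_nat n :: 'b) = 0"
  moreover have "(of_nat n :: 'b) dvd 1" using Qc assms by blast
  ultimately show False by simp
qed

lemma K_A: "x \<in> K \<Longrightarrow> x \<in> A" by (simp add: K_def)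
lemma K_D: "x \<in> K \<Longrightarrow> D x = 0" by (simp add: K_def)
lemma K_0[simp]: "0 \<in> K" by (simp add: K_def)
lemma K_1[simp]: "1 \<in> K" by (simp add: K_def)
lemma K_of_nat[simp]: "of_nat n \<in> K" by (simp add: K_def A_of_nat)
lemma K_Suc[simp]: "1 + of_nat n \<in> K" using K_of_nat[of "Suc n"] by simp
lemma K_add: "x \<in> K \<Longrightarrow> y \<in> K \<Longrightarrow> x + y \<in> K" by (simp add: K_def A_add D_add)
lemma K_neg: "x \<in> K \<Longrightarrow> - x \<in> K" by (simp add: K_def A_neg D_neg)
lemma K_diff: "x \<in> K \<Longrightarrow> y \<in> K \<Longrightarrow> x - y \<in> K" by (simp add: K_def A_diff D_diff)
lemma K_mult: "x \<in> K \<Longrightarrow> y \<in> K \<Longrightarrow> x * y \<in> K" by (simp add: K_def A_mult D_mult)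
lemma K_pow: "x \<in> K \<Longrightarrow> x ^ n \<in> K" by (induction n) (simp_all add: K_mult)

lemma D_multK: "k \<in> K \<Longrightarrow> y \<in> A \<Longrightarrow> D (k * y) = k * D y"
  by (simp add: K_def D_mult)

lemma Dn_A: "x \<in> A \<Longrightarrow> (D ^^ n) x \<in> A"
  by (induction n) (simp_all add: D_A)

lemma Dn_multK: "k \<in> K \<Longrightarrow> y \<in> A \<Longrightarrow> (D ^^ n) (k * y) = k * (D ^^ n) y"
  by (induction n) (simp_all add: D_multK Dn_A)

lemma Dn_diff: "x \<in> A \<Longrightarrow> y \<in> A \<Longrightarrow> (D ^^ n) (x - y) = (D ^^ n) x - (D ^^ n) y"
  by (induction n) (simp_all add: D_diff Dn_A)

lemma D_pow: "r \<in> A \<Longrightarrow> D (r ^ Suc n) = of_nat (Suc n) * r ^ n * D r"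
proof (induction n)
  case 0 then show ?case by simp
next
  case (Suc n)
  have "D (r ^ Suc (Suc n)) = D (r * r ^ Suc n)" by simp
  also have "\<dots> = r * D (r ^ Suc n) + r ^ Suc n * D r" using D_mult[OF Suc(2) A_pow[OF Suc(2)]] .
  also have "\<dots> = of_nat (Suc (Suc n)) * r ^ Suc n * D r" using Suc by (simp add: algebra_simps)
  finally show ?case .
qed

lemma Dn_pow_self: assumes r: "r \<in> A" and F: "D (D r) = 0"
  shows "(D ^^ k) (r ^ k) = of_nat (fact k) * (D r) ^ k"
proof (induction k)
  case 0 then show ?case by simp
next
  case (Suc k)
  have FK: "D r \<in> K" using F D_A[OF r] by (simp add: K_def)
  have "(D ^^ Suc k) (r ^ Suc k) = (D ^^ k) (D (r ^ Suc k))" by (simp add: funpow_Suc_right del: funpow.simps)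
  also have "\<dots> = (D ^^ k) ((of_nat (Suc k) * D r) * r ^ k)" using D_pow[OF r, of k] by (simp add: algebra_simps)
  also have "\<dots> = (of_nat (Suc k) * D r) * (D ^^ k) (r ^ k)"
    by (rule Dn_multK) (simp_all add: K_mult[OF _ FK] A_pow r)
  also have "\<dots> = of_nat (fact (Suc k)) * (D r) ^ Suc k" using Suc by (simp add: algebra_simps)
  finally show ?case .
qed

lemma D_poly: assumes r: "r \<in> A" and Qk: "\<forall>j. coeff Q j \<in> K"
  shows "poly Q r \<in> A \<and> D (poly Q r) = poly (pderiv Q) r * D r"
  using Qk
proof (induction Q rule: pCons_induct)
  case 0 then show ?case by simp
next
  case (pCons a p)
  have a: "a \<in> K" using pCons(3)[rule_format, of 0] by simp
  have pk: "\<forall>j. coeff p j \<in> K" using pCons(3) by (metis coeff_pCons_Suc)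
  note IH = pCons(2)[OF pk]
  have A1: "poly (pCons a p) r \<in> A" using IH a r by (simp add: A_add A_mult K_A)
  have "D (poly (pCons a p) r) = D a + (r * D (poly p r) + poly p r * D r)"
    using IH a r by (simp add: D_add D_mult A_mult K_A)
  also have "\<dots> = poly (pderiv (pCons a p)) r * D r"
    using IH a by (simp add: pderiv_pCons K_D algebra_simps)
  finally show ?case using A1 by simp
qed

lemma pderiv_K: "\<forall>j. coeff Q j \<in> K \<Longrightarrow> \<forall>j. coeff (pderiv Q) j \<in> K"
  by (simp add: coeff_pderiv K_mult[OF K_Suc])

lemma transc: assumes r: "r \<in> A" and Dr: "D r \<noteq> 0"
  shows "\<forall>j. coeff Q j \<in> K \<Longrightarrow> poly Q r = 0 \<Longrightarrow> Q = 0"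
proof (induction "degree Q" arbitrary: Q rule: less_induct)
  case less
  show ?case
  proof (cases "degree Q = 0")
    case True
    then obtain a where "Q = [:a:]" by (rule degree_eq_zeroE)
    then show ?thesis using less(3) by simp
  next
    case False
    have "D (poly Q r) = poly (pderiv Q) r * D r" using D_poly[OF r less(2)] by blast
    then have "poly (pderiv Q) r = 0" using less(3) Dr by simp
    moreover have "degree (pderiv Q) < degree Q"
    proof -
      have "degree (pderiv Q) \<le> degree Q - 1"
        by (rule degree_le) (simp add: coeff_pderiv coeff_eq_0)
      then show ?thesis using False by simp
    qed
    ultimately have "pderiv Q = 0" using less(1) pderiv_K[OF less(2)] by blast
    then have "coeff Q (Suc (degree Q - 1)) = 0"
      using coeff_pderiv[of Q "degree Q - 1"] ofnat_nz[of "Suc (degree Q - 1)"] by simp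
    then have "coeff Q (degree Q) = 0" using False by simp
    then have "Q = 0" by simp
    then show ?thesis .
  qed
qed

lemma D_sum: "finite S \<Longrightarrow> (\<And>s. s \<in> S \<Longrightarrow> f s \<in> A) \<Longrightarrow> D (sum f S) = (\<Sum>s\<in>S. D (f s))"
  by (induction S rule: finite_induct) (simp_all add: D_add A_sum)

lemma nmul_H: "i \<in> H \<Longrightarrow> nmul n i \<in> H"
  using H_elim[of i d] by (auto simp: nmul_zmul)

lemma e_H_and_hom: "e \<in> H \<and> (\<exists>i\<in>H. \<exists>x\<in>Bc i. D x \<noteq> 0)"
proof -
  obtain x where x: "x \<in> A" "D x \<noteq> 0" using nzD by blast
  obtain c where c: "\<forall>i. c i \<in> Bc i" "finite {i. c i \<noteq> 0}" "{i. c i \<noteq> 0} \<subseteq> H" "x = (\<Sum>i\<in>{i. c i \<noteq> 0}. c i)"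
    using A_decomp[OF x(1)] by blast
  have cA: "c i \<in> A" if "i \<in> {i. c i \<noteq> 0}" for i using that c(1,3) Bc_A by blast
  have "D x = (\<Sum>i\<in>{i. c i \<noteq> 0}. D (c i))"
    unfolding c(4) by (rule D_sum[OF c(2) cA])
  then have "\<not> (\<forall>i\<in>{i. c i \<noteq> 0}. D (c i) = 0)"
  proof (intro notI)
    assume "\<forall>i\<in>{i. c i \<noteq> 0}. D (c i) = 0"
    then have "(\<Sum>i\<in>{i. c i \<noteq> 0}. D (c i)) = 0" by (rule sum.neutral)
    then show False using x(2) \<open>D x = _\<close> by simp
  qed
  then obtain i where i: "i \<in> {i. c i \<noteq> 0}" "D (c i) \<noteq> 0" by blast
  have iH: "i \<in> H" using i c(3) by blast
  have "D (c i) \<in> Bc (i + e)" using D_hom[OF iH] c(1) by blast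
  then have "i + e \<in> H" using A_deg[OF D_A[OF cA[OF i(1)]] _ i(2)] by blast
  then have "(i + e) - i \<in> H" using H_diff[OF _ iH] by blast
  then have "e \<in> H" by simp
  then show ?thesis using iH c(1) i(2) by blast
qed

lemma e_H: "e \<in> H" using e_H_and_hom by blast

lemma Dn_hom: "i \<in> H \<Longrightarrow> x \<in> Bc i \<Longrightarrow> (D ^^ n) x \<in> Bc (i + nmul n e)"
proof (induction n)
  case 0 then show ?case by simp
next
  case (Suc n)
  have "i + nmul n e \<in> H" using H_add[OF Suc(2) nmul_H[OF e_H]] .
  then have "D ((D ^^ n) x) \<in> Bc (i + nmul n e + e)" using D_hom Suc by blast
  then show ?case by (simp add: algebra_simps)
qed

lemma local_slice: "\<exists>\<rho>\<in>H. \<exists>r\<in>Bc \<rho>. D r \<noteq> 0 \<and> D (D r) = 0"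
proof -
  obtain i x where ix: "i \<in> H" "x \<in> Bc i" "D x \<noteq> 0" using e_H_and_hom by blast
  have xA: "x \<in> A" using Bc_A ix by blast
  obtain n0 where n0: "(D ^^ n0) x = 0" using lnd xA unfolding locally_nilpotent_on_def by blast
  define P where "P n = ((D ^^ Suc n) x = 0)" for n
  have "P n0" using n0 by (simp add: P_def)
  define m where "m = (LEAST n. P n)"
  have Pm: "P m" unfolding m_def by (rule LeastI[of P n0, OF \<open>P n0\<close>])
  have m0: "m \<noteq> 0" using Pm ix(3) by (cases m) (auto simp: P_def)
  have "m - 1 < m" using m0 by simp
  then have nP: "\<not> P (m - 1)" unfolding m_def by (rule not_less_Least)
  define r where "r = (D ^^ (m - 1)) x"
  have "D r = (D ^^ Suc (m - 1)) x" by (simp add: r_def)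
  then have "D r = (D ^^ m) x" using m0 by simp
  have Dr1: "D r \<noteq> 0" using nP \<open>D r = (D ^^ Suc (m - 1)) x\<close> unfolding P_def by simp
  have Dr2: "D (D r) = 0" using Pm \<open>D r = (D ^^ m) x\<close> unfolding P_def by simp
  note Dr = Dr1 Dr2
  have "r \<in> Bc (i + nmul (m - 1) e)" unfolding r_def by (rule Dn_hom[OF ix(1,2)])
  moreover have "i + nmul (m - 1) e \<in> H" using H_add[OF ix(1) nmul_H[OF e_H]] .
  ultimately show ?thesis using Dr by blast
qed

lemma ker_hom: assumes "\<exists>x\<in>A. D x = 0 \<and> x \<notin> Bc 0"
  shows "\<exists>i\<in>H. i \<noteq> 0 \<and> (\<exists>h\<in>Bc i. h \<noteq> 0 \<and> D h = 0)"
proof -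
  obtain x where x: "x \<in> A" "D x = 0" "x \<notin> Bc 0" using assms by blast
  obtain c where c: "\<forall>i. c i \<in> Bc i" "finite {i. c i \<noteq> 0}" "{i. c i \<noteq> 0} \<subseteq> H" "x = (\<Sum>i\<in>{i. c i \<noteq> 0}. c i)"
    using A_decomp[OF x(1)] by blast
  have cA: "c i \<in> A" if "i \<in> {i. c i \<noteq> 0}" for i using that c(1,3) Bc_A by blast
  have s0: "(\<Sum>i\<in>{i. c i \<noteq> 0}. D (c i)) = 0"
  proof -
    have "D x = (\<Sum>i\<in>{i. c i \<noteq> 0}. D (c i))"
      unfolding c(4) by (rule D_sum[OF c(2) cA])
    then show ?thesis using x(2) by simp
  qed
  have inj: "inj_on (\<lambda>i. i + e) {i. c i \<noteq> 0}" by (simp add: inj_on_def)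
  have mem: "D (c j) \<in> Bc (j + e)" if "j \<in> {i. c i \<noteq> 0}" for j
  proof -
    have "j \<in> H" using that c(3) by blast
    then show ?thesis using D_hom c(1) by blast
  qed
  have Dc: "D (c i) = 0" if "i \<in> {i. c i \<noteq> 0}" for i
    using core[where \<sigma>="\<lambda>i. i + e" and c="\<lambda>i. D (c i)", OF c(2) inj mem s0 that] .
  have "\<exists>i\<in>{i. c i \<noteq> 0}. i \<noteq> 0"
  proof (rule ccontr)
    assume "\<not> ?thesis"
    then have s0': "\<And>s. s \<in> {i. c i \<noteq> 0} \<Longrightarrow> s = 0" by blast
    have "\<And>s. s \<in> {i. c i \<noteq> 0} \<Longrightarrow> c s \<in> Bc 0"
    proof -
      fix s assume "s \<in> {i. c i \<noteq> 0}"
      then have "s = 0" by (rule s0')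
      then show "c s \<in> Bc 0" using c(1) by metis
    qed
    then have "x \<in> Bc 0" unfolding c(4) by (rule Bc_sum[OF c(2)])
    then show False using x(3) by blast
  qed
  then obtain i where i: "i \<in> {i. c i \<noteq> 0}" "i \<noteq> 0" by blast
  have "i \<in> H" using i(1) c(3) by blast
  moreover have "c i \<in> Bc i" "c i \<noteq> 0" "D (c i) = 0" using c(1) i(1) Dc[OF i(1)] by simp_all
  ultimately show ?thesis using i(2) by blast
qed

end


context ld
begin

lemma coeff_const: "coeff [:b:] j = (if j = 0 then b else 0)"
  by (cases j) simp_all

lemma slice_hom:
  assumes rH: "\<rho> \<in> H" and r: "r \<in> Bc \<rho>" and F: "D (D r) = 0"
  shows "\<beta> \<in> H \<Longrightarrow> b \<in> Bc \<beta> \<Longrightarrow> (D ^^ Suc n) b = 0 \<Longrightarrow>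
    \<exists>M N Q. M > 0 \<and> (\<forall>j. coeff Q j \<in> K \<and> coeff Q j \<in> Bc (\<beta> + nmul N (\<rho> + e) - nmul j \<rho>)) \<and>
       of_nat M * (D r) ^ N * b = poly Q r"
proof (induction n arbitrary: b \<beta>)
  case 0
  have bK: "b \<in> K" using 0 Bc_A by (simp add: K_def)
  have "\<forall>j. coeff [:b:] j \<in> K \<and> coeff [:b:] j \<in> Bc (\<beta> + nmul 0 (\<rho> + e) - nmul j \<rho>)"
    using bK 0(2) by (simp add: coeff_const)
  moreover have "of_nat 1 * (D r) ^ 0 * b = poly [:b:] r" by simp
  ultimately show ?case by (intro exI[of _ 1] exI[of _ 0] exI[of _ "[:b:]"]) simp
next
  case (Suc n)
  define F where "F = D r"
  define \<phi> where "\<phi> = \<rho> + e"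
  have rA: "r \<in> A" using Bc_A rH r by blast
  have FK: "F \<in> K" using F D_A[OF rA] by (simp add: K_def F_def)
  have FB: "F \<in> Bc \<phi>" using D_hom[OF rH r] by (simp add: F_def \<phi>_def)
  have bA: "b \<in> A" using Bc_A Suc(2,3) by blast
  define c where "c = (D ^^ Suc n) b"
  have cA: "c \<in> A" unfolding c_def by (rule Dn_A[OF bA])
  have "D c = (D ^^ Suc (Suc n)) b" by (simp add: c_def)
  then have cK: "c \<in> K" using Suc(4) cA by (simp add: K_def)
  have cB: "c \<in> Bc (\<beta> + nmul (Suc n) e)" unfolding c_def by (rule Dn_hom[OF Suc(2,3)])
  define k where "k = of_nat (fact (Suc n)) * F ^ Suc n"
  have kK: "k \<in> K" unfolding k_def by (rule K_mult[OF K_of_nat K_pow[OF FK]])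
  define b2 where "b2 = k * b - c * r ^ Suc n"
  have b2A: "b2 \<in> A" by (simp add: b2_def A_diff A_mult K_A[OF kK] K_A[OF cK] bA A_pow rA)
  have Db2: "(D ^^ Suc n) b2 = 0"
  proof -
    have "(D ^^ Suc n) b2 = (D ^^ Suc n) (k * b) - (D ^^ Suc n) (c * r ^ Suc n)"
      unfolding b2_def by (rule Dn_diff) (simp_all add: A_mult K_A[OF kK] K_A[OF cK] bA A_pow rA)
    also have "\<dots> = k * c - c * (D ^^ Suc n) (r ^ Suc n)"
      by (simp only: Dn_multK[OF kK bA] Dn_multK[OF cK A_pow[OF rA]] c_def[symmetric])
    also have "(D ^^ Suc n) (r ^ Suc n) = k" unfolding k_def F_def by (rule Dn_pow_self[OF rA F])
    finally show ?thesis by simp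
  qed
  define \<beta>2 where "\<beta>2 = \<beta> + nmul (Suc n) \<phi>"
  have \<beta>2H: "\<beta>2 \<in> H" unfolding \<beta>2_def \<phi>_def by (rule H_add[OF Suc(2) nmul_H[OF H_add[OF rH e_H]]])
  have b2B: "b2 \<in> Bc \<beta>2"
  proof -
    have kB: "k \<in> Bc (0 + nmul (Suc n) \<phi>)" unfolding k_def
      by (rule Bc_mult[OF of_nat_Bc0 pow_Bc[OF FB]])
    have 1: "k * b \<in> Bc \<beta>2" by (rule Bc_mult'[OF kB Suc(3)]) (simp add: \<beta>2_def algebra_simps)
    have 2: "c * r ^ Suc n \<in> Bc \<beta>2"
      by (rule Bc_mult'[OF cB pow_Bc[OF r]]) (simp add: \<beta>2_def \<phi>_def nmul_distrib algebra_simps)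
    show ?thesis unfolding b2_def by (rule Bc_diff[OF 1 2])
  qed
  obtain M' N' Q' where IH: "M' > 0" "\<forall>j. coeff Q' j \<in> K \<and> coeff Q' j \<in> Bc (\<beta>2 + nmul N' (\<rho> + e) - nmul j \<rho>)"
      "of_nat M' * (D r) ^ N' * b2 = poly Q' r"
    using Suc(1)[OF \<beta>2H b2B Db2] by blast
  define a where "a = of_nat M' * F ^ N' * c"
  define Q where "Q = Q' + monom a (Suc n)"
  have aK: "a \<in> K" unfolding a_def by (rule K_mult[OF K_mult[OF K_of_nat K_pow[OF FK]] cK])
  have aB: "a \<in> Bc (\<beta> + nmul (N' + Suc n) \<phi> - nmul (Suc n) \<rho>)"
    unfolding a_def
    by (rule Bc_mult'[OF Bc_mult[OF of_nat_Bc0 pow_Bc[OF FB]] cB]) (simp add: \<phi>_def nmul_distrib nmul_add algebra_simps)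
  have coefQ: "\<forall>j. coeff Q j \<in> K \<and> coeff Q j \<in> Bc (\<beta> + nmul (N' + Suc n) \<phi> - nmul j \<rho>)"
  proof
    fix j
    have q1: "coeff Q' j \<in> K" "coeff Q' j \<in> Bc (\<beta> + nmul (N' + Suc n) \<phi> - nmul j \<rho>)"
      using IH(2) by (simp_all add: \<beta>2_def \<phi>_def nmul_add algebra_simps)
    show "coeff Q j \<in> K \<and> coeff Q j \<in> Bc (\<beta> + nmul (N' + Suc n) \<phi> - nmul j \<rho>)"
    proof (cases "j = Suc n")
      case True
      then show ?thesis using q1 aK aB by (simp add: Q_def K_add Bc_add)
    next
      case False
      then show ?thesis using q1 by (simp add: Q_def)
    qed
  qed
  have eq: "of_nat (M' * fact (Suc n)) * (D r) ^ (N' + Suc n) * b = poly Q r"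
  proof -
    have "of_nat (M' * fact (Suc n)) * (D r) ^ (N' + Suc n) * b = of_nat M' * F ^ N' * (k * b)"
      by (simp add: k_def F_def power_add algebra_simps)
    also have "k * b = b2 + c * r ^ Suc n" by (simp add: b2_def)
    also have "of_nat M' * F ^ N' * (b2 + c * r ^ Suc n) = poly Q' r + a * r ^ Suc n"
      using IH(3) by (simp add: F_def a_def algebra_simps)
    also have "\<dots> = poly Q r" by (simp add: Q_def poly_monom)
    finally show ?thesis .
  qed
  show ?case
    by (rule exI[of _ "M' * fact (Suc n)"], rule exI[of _ "N' + Suc n"], rule exI[of _ Q])
      (use IH(1) coefQ eq in \<open>simp add: \<phi>_def\<close>)
qed

end


definition tf :: "'a::idom \<Rightarrow> 'a fract" where "tf x = Fraction_Field.Fract x 1"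

lemma tf_add[simp]: "tf (x + y) = tf x + tf y" by (simp add: tf_def)
lemma tf_mult[simp]: "tf (x * y) = tf x * tf y" by (simp add: tf_def)
lemma tf_0[simp]: "tf 0 = 0" by (simp add: tf_def fract_collapse)
lemma tf_1[simp]: "tf 1 = 1" by (simp add: tf_def fract_collapse)
lemma tf_neg[simp]: "tf (- x) = - tf x" by (simp add: tf_def)
lemma tf_diff[simp]: "tf (x - y) = tf x - tf y" by (simp add: tf_def)
lemma tf_pow[simp]: "tf (x ^ n) = tf x ^ n" by (induction n) simp_all
lemma tf_of_nat[simp]: "tf (of_nat n) = of_nat n" by (induction n) simp_all
lemma tf_eq0[simp]: "tf x = 0 \<longleftrightarrow> x = 0"
  by (simp add: tf_def Zero_fract_def eq_fract)
lemma tf_inj: "tf x = tf y \<longleftrightarrow> x = y"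
  using tf_eq0[of "x - y"] by (simp del: tf_eq0)
lemma tf_sum: "tf (sum f S) = (\<Sum>s\<in>S. tf (f s))"
  by (induction S rule: infinite_finite_induct) simp_all
lemma Fract_tf: "Fraction_Field.Fract x y = tf x / tf y"
proof (cases "y = 0")
  case True then show ?thesis by (simp add: fract_collapse)
next
  case False then show ?thesis by (simp add: tf_def)
qed



context gv begin
lemma Bz_A: "x \<in> Bc (zmul a d) \<Longrightarrow> x \<in> A" using Bc_A[OF H_zmul] .
lemma Bz_mult: "x \<in> Bc (zmul a d) \<Longrightarrow> y \<in> Bc (zmul b d) \<Longrightarrow> c = a + b \<Longrightarrow> x * y \<in> Bc (zmul c d)"
  using Bc_mult by (simp add: zmul_add)
lemma Bz_pow: "x \<in> Bc (zmul a d) \<Longrightarrow> x ^ n \<in> Bc (zmul (int n * a) d)"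
  by (drule pow_Bc[where n=n]) (simp add: nmul_zmul)
lemma Bz_eq: "x \<in> Bc (zmul a d) \<Longrightarrow> a = b \<Longrightarrow> x \<in> Bc (zmul b d)" by simp
end

locale fin = ld Bc d D e for Bc :: "'g::ab_group_add \<Rightarrow> 'b::idom set" and d D e +
  fixes r' :: 'b and \<rho>' \<epsilon> :: int and m :: nat and u u' :: 'b and \<mu> :: int
  assumes eps: "e = zmul \<epsilon> d"
  and r'B: "r' \<in> Bc (zmul \<rho>' d)"
  and F'K: "D (D r') = 0"
  and F'nz: "D r' \<noteq> 0"
  and phinz: "\<rho>' + \<epsilon> \<noteq> 0"
  and m0: "m > 0"
  and uK: "u \<in> K" "u \<noteq> 0" "u \<in> Bc (zmul \<mu> d)"
  and u'K: "u' \<in> K" "u' \<in> Bc (zmul (2 * (\<rho>' + \<epsilon>) - \<mu>) d)"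
  and uu': "u * u' = (D r') ^ 2"
  and mu: "\<mu> + int m * \<rho>' = (int m + 1) * (\<rho>' + \<epsilon>)"
  and mdvd: "\<And>j x y a1 b1. x \<in> K \<Longrightarrow> y \<in> K \<Longrightarrow> x \<noteq> 0 \<Longrightarrow> y \<noteq> 0 \<Longrightarrow> x \<in> Bc (zmul a1 d) \<Longrightarrow>
      y \<in> Bc (zmul b1 d) \<Longrightarrow> a1 - b1 = int j * \<epsilon> \<Longrightarrow> m dvd j"
begin

definition "Fp = D r'"
definition "phi = \<rho>' + \<epsilon>"
definition "L = degree0_localization Bc (zmul phi d) Fp"
definition "R0 = {tf k / tf Fp ^ n | k n. k \<in> K \<and> k \<in> Bc (zmul (int n * phi) d)}"
definition "t = tf (u * r' ^ m) / tf Fp ^ (m + 1)"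

lemma r'A: "r' \<in> A" using Bz_A[OF r'B] .
lemma FpK: "Fp \<in> K" using F'K D_A[OF r'A] by (simp add: K_def Fp_def)
lemma Fpnz: "Fp \<noteq> 0" using F'nz by (simp add: Fp_def)
lemma tFpnz: "tf Fp \<noteq> 0" using Fpnz by simp
lemma FpB: "Fp \<in> Bc (zmul phi d)"
  using D_hom[OF H_zmul r'B] by (simp add: Fp_def phi_def eps zmul_add)
lemma FpnB: "Fp ^ n \<in> Bc (zmul (int n * phi) d)" using Bz_pow[OF FpB] .

lemma L_char: "L = {tf b / tf Fp ^ n | b n. b \<in> Bc (zmul (int n * phi) d)}"
  by (simp add: L_def degree0_localization_def Fract_tf nmul_zmul)

lemma R0I: "k \<in> K \<Longrightarrow> k \<in> Bc (zmul (int n * phi) d) \<Longrightarrow> z = tf k / tf Fp ^ n \<Longrightarrow> z \<in> R0"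
  unfolding R0_def by blast
lemma LI: "b \<in> Bc (zmul (int n * phi) d) \<Longrightarrow> z = tf b / tf Fp ^ n \<Longrightarrow> z \<in> L"
  unfolding L_char by blast

lemma R0_0: "0 \<in> R0" by (rule R0I[of 0 0]) simp_all
lemma R0_1: "1 \<in> R0" by (rule R0I[OF FpK, of 1]) (simp_all add: FpB tFpnz Fpnz)

lemma frac_add: "tf k1 / tf Fp ^ n1 + tf k2 / tf Fp ^ n2 = tf (k1 * Fp ^ n2 + k2 * Fp ^ n1) / tf Fp ^ (n1 + n2)"
  using tFpnz by (simp add: field_simps power_add)
lemma frac_mult: "tf k1 / tf Fp ^ n1 * (tf k2 / tf Fp ^ n2) = tf (k1 * k2) / tf Fp ^ (n1 + n2)"
  using tFpnz by (simp add: field_simps power_add)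

lemma R0_add: assumes "z1 \<in> R0" "z2 \<in> R0" shows "z1 + z2 \<in> R0"
proof -
  obtain k1 n1 where 1: "k1 \<in> K" "k1 \<in> Bc (zmul (int n1 * phi) d)" "z1 = tf k1 / tf Fp ^ n1" using assms(1) R0_def by blast
  obtain k2 n2 where 2: "k2 \<in> K" "k2 \<in> Bc (zmul (int n2 * phi) d)" "z2 = tf k2 / tf Fp ^ n2" using assms(2) R0_def by blast
  show ?thesis
  proof (rule R0I[of _ "n1 + n2"])
    show "k1 * Fp ^ n2 + k2 * Fp ^ n1 \<in> K" using 1 2 FpK by (simp add: K_add K_mult K_pow)
    show "k1 * Fp ^ n2 + k2 * Fp ^ n1 \<in> Bc (zmul (int (n1 + n2) * phi) d)"
      by (rule Bc_add; rule Bz_mult[OF _ FpnB]) (use 1 2 in \<open>simp_all add: algebra_simps\<close>)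
    show "z1 + z2 = tf (k1 * Fp ^ n2 + k2 * Fp ^ n1) / tf Fp ^ (n1 + n2)" using 1 2 frac_add by simp
  qed
qed

lemma R0_mult: assumes "z1 \<in> R0" "z2 \<in> R0" shows "z1 * z2 \<in> R0"
proof -
  obtain k1 n1 where 1: "k1 \<in> K" "k1 \<in> Bc (zmul (int n1 * phi) d)" "z1 = tf k1 / tf Fp ^ n1" using assms(1) R0_def by blast
  obtain k2 n2 where 2: "k2 \<in> K" "k2 \<in> Bc (zmul (int n2 * phi) d)" "z2 = tf k2 / tf Fp ^ n2" using assms(2) R0_def by blast
  show ?thesis
  proof (rule R0I[of _ "n1 + n2"])
    show "k1 * k2 \<in> K" using 1 2 by (simp add: K_mult)
    show "k1 * k2 \<in> Bc (zmul (int (n1 + n2) * phi) d)"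
      by (rule Bz_mult[OF 1(2) 2(2)]) (simp add: algebra_simps)
    show "z1 * z2 = tf (k1 * k2) / tf Fp ^ (n1 + n2)" using 1 2 frac_mult by simp
  qed
qed

lemma R0_neg: assumes "z1 \<in> R0" shows "- z1 \<in> R0"
proof -
  obtain k1 n1 where 1: "k1 \<in> K" "k1 \<in> Bc (zmul (int n1 * phi) d)" "z1 = tf k1 / tf Fp ^ n1" using assms(1) R0_def by blast
  show ?thesis by (rule R0I[of "- k1" n1]) (use 1 in \<open>simp_all add: K_neg Bc_neg\<close>)
qed

lemma R0_diff: "z1 \<in> R0 \<Longrightarrow> z2 \<in> R0 \<Longrightarrow> z1 - z2 \<in> R0"
  using R0_add[OF _ R0_neg] by (simp add: diff_conv_add_uminus del: add_uminus_conv_diff)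

lemma R0_subring: "is_subring R0"
  unfolding is_subring_def using R0_0 R0_1 R0_add R0_mult R0_neg by blast

lemma L_add: assumes "z1 \<in> L" "z2 \<in> L" shows "z1 + z2 \<in> L"
proof -
  obtain k1 n1 where 1: "k1 \<in> Bc (zmul (int n1 * phi) d)" "z1 = tf k1 / tf Fp ^ n1" using assms(1) L_char by blast
  obtain k2 n2 where 2: "k2 \<in> Bc (zmul (int n2 * phi) d)" "z2 = tf k2 / tf Fp ^ n2" using assms(2) L_char by blast
  show ?thesis
  proof (rule LI[of _ "n1 + n2"])
    show "k1 * Fp ^ n2 + k2 * Fp ^ n1 \<in> Bc (zmul (int (n1 + n2) * phi) d)"
      by (rule Bc_add; rule Bz_mult[OF _ FpnB]) (use 1 2 in \<open>simp_all add: algebra_simps\<close>)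
    show "z1 + z2 = tf (k1 * Fp ^ n2 + k2 * Fp ^ n1) / tf Fp ^ (n1 + n2)" using 1 2 frac_add by simp
  qed
qed

lemma L_mult: assumes "z1 \<in> L" "z2 \<in> L" shows "z1 * z2 \<in> L"
proof -
  obtain k1 n1 where 1: "k1 \<in> Bc (zmul (int n1 * phi) d)" "z1 = tf k1 / tf Fp ^ n1" using assms(1) L_char by blast
  obtain k2 n2 where 2: "k2 \<in> Bc (zmul (int n2 * phi) d)" "z2 = tf k2 / tf Fp ^ n2" using assms(2) L_char by blast
  show ?thesis
  proof (rule LI[of _ "n1 + n2"])
    show "k1 * k2 \<in> Bc (zmul (int (n1 + n2) * phi) d)"
      by (rule Bz_mult[OF 1(1) 2(1)]) (simp add: algebra_simps)
    show "z1 * z2 = tf (k1 * k2) / tf Fp ^ (n1 + n2)" using 1 2 frac_mult by simp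
  qed
qed

lemma R0_L: "R0 \<subseteq> L" unfolding R0_def L_char by blast

lemma t_L: "t \<in> L"
proof (rule LI[of _ "m + 1"])
  show "u * r' ^ m \<in> Bc (zmul (int (m + 1) * phi) d)"
    by (rule Bz_mult[OF uK(3) Bz_pow[OF r'B]]) (use mu in \<open>simp add: phi_def\<close>)
qed (simp add: t_def)

lemma poly_L: "\<forall>j. coeff p j \<in> R0 \<Longrightarrow> poly p t \<in> L"
proof (induction p rule: pCons_induct)
  case 0 then show ?case using R0_L R0_0 by auto
next
  case (pCons a p)
  have "a \<in> R0" using pCons(3)[rule_format, of 0] by simp
  moreover have "\<forall>j. coeff p j \<in> R0" using pCons(3) by (metis coeff_pCons_Suc)
  ultimately show ?case using pCons(2) R0_L L_add L_mult t_L by (simp add: subset_iff)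
qed

end


context fin begin

lemma R0E: assumes "z \<in> R0" obtains k n where "k \<in> K" "k \<in> Bc (zmul (int n * phi) d)" "z = tf k / tf Fp ^ n"
  using assms unfolding R0_def by blast

lemma clear: "\<forall>j. coeff p j \<in> R0 \<Longrightarrow>
  \<exists>N Q. (\<forall>j. coeff Q j \<in> K) \<and> poly p t = tf (poly Q r') / tf Fp ^ N \<and> (p \<noteq> 0 \<longrightarrow> Q \<noteq> 0)"
proof (induction p rule: pCons_induct)
  case 0 then show ?case by (intro exI[of _ 0] exI[of _ 0]) simp
next
  case (pCons c p)
  have cR: "c \<in> R0" using pCons(3)[rule_format, of 0] by simp
  then obtain k n where k: "k \<in> K" "c = tf k / tf Fp ^ n" by (rule R0E)
  have "\<forall>j. coeff p j \<in> R0" using pCons(3) by (metis coeff_pCons_Suc)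
  then obtain N Q where Q: "\<forall>j. coeff Q j \<in> K" "poly p t = tf (poly Q r') / tf Fp ^ N" "p \<noteq> 0 \<longrightarrow> Q \<noteq> 0"
    using pCons(2) by blast
  define w where "w = u * Fp ^ n"
  have wK: "w \<in> K" unfolding w_def by (rule K_mult[OF uK(1) K_pow[OF FpK]])
  have wnz: "w \<noteq> 0" using uK(2) Fpnz by (simp add: w_def)
  define Q2 where "Q2 = [:k * Fp ^ (m + 1 + N):] + smult w (monom 1 m * Q)"
  have cQ2: "coeff Q2 j = (if j = 0 then k * Fp ^ (m + 1 + N) else 0) + w * (if j < m then 0 else coeff Q (j - m))" for j
    by (simp add: Q2_def coeff_monom_mult coeff_const)
  have Q2K: "\<forall>j. coeff Q2 j \<in> K"
  proof
    fix j
    have "k * Fp ^ (m + 1 + N) \<in> K" by (rule K_mult[OF k(1) K_pow[OF FpK]])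
    then show "coeff Q2 j \<in> K" unfolding cQ2 using Q(1) wK by (simp add: K_add K_mult)
  qed
  have eq: "poly (pCons c p) t = tf (poly Q2 r') / tf Fp ^ (n + (m + 1) + N)"
  proof -
    have "poly (pCons c p) t = tf k / tf Fp ^ n + tf (u * r' ^ m) / tf Fp ^ (m + 1) * (tf (poly Q r') / tf Fp ^ N)"
      using k(2) Q(2) by (simp add: t_def)
    also have "\<dots> = tf (poly Q2 r') / tf Fp ^ (n + (m + 1) + N)"
      using tFpnz by (simp add: Q2_def w_def poly_monom field_simps power_add)
    finally show ?thesis .
  qed
  have nz: "pCons c p \<noteq> 0 \<longrightarrow> Q2 \<noteq> 0"
  proof
    assume pc: "pCons c p \<noteq> 0"
    show "Q2 \<noteq> 0"
    proof (cases "c = 0")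
      case False
      then have "k \<noteq> 0" using k(2) by auto
      then have "coeff Q2 0 \<noteq> 0" using m0 Fpnz by (simp add: cQ2)
      then show ?thesis by auto
    next
      case True
      then have "p \<noteq> 0" using pc by auto
      then have "Q \<noteq> 0" using Q(3) by simp
      then have "coeff Q2 (m + degree Q) \<noteq> 0" using m0 wnz by (simp add: cQ2)
      then show ?thesis by auto
    qed
  qed
  show ?case using Q2K eq nz by blast
qed

lemma inj_t: "inj_on (\<lambda>p. poly p t) {p. \<forall>k. coeff p k \<in> R0}"
proof (rule inj_onI)
  fix p q assume p: "p \<in> {p. \<forall>k. coeff p k \<in> R0}" and q: "q \<in> {p. \<forall>k. coeff p k \<in> R0}"
    and eq: "poly p t = poly q t"
  have "\<forall>j. coeff (p - q) j \<in> R0" using p q by (simp add: R0_diff)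
  then obtain N Q where Q: "\<forall>j. coeff Q j \<in> K" "poly (p - q) t = tf (poly Q r') / tf Fp ^ N" "p - q \<noteq> 0 \<longrightarrow> Q \<noteq> 0"
    using clear by blast
  have "tf (poly Q r') / tf Fp ^ N = 0" using Q(2) eq by simp
  then have "poly Q r' = 0" using tFpnz by simp
  then have "Q = 0" using transc[OF r'A F'nz Q(1)] by blast
  then show "p = q" using Q(3) by simp
qed

end


lemma field_ident0:
  fixes Y Z P V R W Kk :: "'a::field"
  assumes "Y \<noteq> 0"
  shows "(W * Kk * Y * V / Z) * (P * R / Y) = W * Kk * R * (P * V) / Z"
  using assms by (simp add: field_simps)

lemma field_ident:
  fixes X U V R W Kk :: "'a::field"
  assumes X: "X \<noteq> 0" and UV: "U ^ q * V ^ q = X ^ (2 * q)"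
  shows "(W * Kk * X ^ ((m + 1) * q) * V ^ q / X ^ (b + 2 * q)) * (U * R ^ m / X ^ (m + 1)) ^ q
       = W * Kk * R ^ (m * q) / X ^ b"
proof -
  have "(U * R ^ m / X ^ (m + 1)) ^ q = U ^ q * R ^ (m * q) / X ^ ((m + 1) * q)"
    by (simp only: power_divide power_mult_distrib power_mult)
  then have "(W * Kk * X ^ ((m + 1) * q) * V ^ q / X ^ (b + 2 * q)) * (U * R ^ m / X ^ (m + 1)) ^ q
      = W * Kk * R ^ (m * q) * (U ^ q * V ^ q) / X ^ (b + 2 * q)"
    using field_ident0[of "X ^ ((m + 1) * q)"] X by simp
  also have "\<dots> = W * Kk * R ^ (m * q) * X ^ (2 * q) / (X ^ b * X ^ (2 * q))"
    by (simp add: UV power_add)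
  also have "\<dots> = W * Kk * R ^ (m * q) / X ^ b" using X by simp
  finally show ?thesis .
qed

context fin begin

definition "Img = (\<lambda>p. poly p t) ` {p. \<forall>k. coeff p k \<in> R0}"

lemma Img_0: "0 \<in> Img" unfolding Img_def using R0_0 by (auto intro!: image_eqI[of _ _ 0])
lemma Img_add: assumes "z1 \<in> Img" "z2 \<in> Img" shows "z1 + z2 \<in> Img"
proof -
  obtain p1 p2 where "\<forall>k. coeff p1 k \<in> R0" "\<forall>k. coeff p2 k \<in> R0" "z1 = poly p1 t" "z2 = poly p2 t"
    using assms unfolding Img_def by blast
  then show ?thesis unfolding Img_def by (auto intro!: image_eqI[of _ _ "p1 + p2"] R0_add)
qed
lemma Img_sum: "finite S \<Longrightarrow> (\<And>s. s \<in> S \<Longrightarrow> f s \<in> Img) \<Longrightarrow> sum f S \<in> Img"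
  by (induction S rule: finite_induct) (auto intro: Img_add Img_0)
lemma Img_monom: assumes "c \<in> R0" shows "c * t ^ q \<in> Img"
  unfolding Img_def using assms R0_0 by (auto intro!: image_eqI[of _ _ "monom c q"] simp: poly_monom)

lemma surj_t: "L \<subseteq> Img"
proof
  fix z assume "z \<in> L"
  then obtain b n where bn: "b \<in> Bc (zmul (int n * phi) d)" "z = tf b / tf Fp ^ n" unfolding L_char by blast
  have bA: "b \<in> A" using Bz_A[OF bn(1)] .
  obtain n0 where "(D ^^ n0) b = 0" using lnd bA unfolding locally_nilpotent_on_def by blast
  then have n0: "(D ^^ Suc n0) b = 0" by simp
  obtain M N Q where MNQ: "M > 0"
    "\<forall>j. coeff Q j \<in> K \<and> coeff Q j \<in> Bc (zmul (int n * phi) d + nmul N (zmul \<rho>' d + e) - nmul j (zmul \<rho>' d))"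
    "of_nat M * (D r') ^ N * b = poly Q r'"
    using slice_hom[OF H_zmul r'B F'K H_zmul bn(1) n0] by blast
  have deg: "zmul (int n * phi) d + nmul N (zmul \<rho>' d + e) - nmul j (zmul \<rho>' d)
      = zmul (int n * phi + int N * phi - int j * \<rho>') d" for j
  proof -
    have "zmul \<rho>' d + e = zmul phi d" by (simp add: eps phi_def zmul_add)
    then show ?thesis by (simp only: nmul_zmul zmul_add zmul_diff)
  qed
  have QK: "coeff Q j \<in> K" and QB: "coeff Q j \<in> Bc (zmul (int n * phi + int N * phi - int j * \<rho>') d)" for j
    using MNQ(2) deg by simp_all
  have "(of_nat M :: 'b) dvd 1" using Qc MNQ(1) by simp
  then obtain w :: 'b where w: "1 = of_nat M * w" unfolding dvd_def by blast
  have Mnz: "(of_nat M :: 'b) \<noteq> 0" using ofnat_nz MNQ(1) by simp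
  have wB0: "w \<in> Bc 0"
    using division[OF of_nat_Bc0 Mnz, of w 0] one_Bc0 w by (simp add: mult.commute)
  have wK: "w \<in> K"
  proof -
    have wA: "w \<in> A" using Bc_A[OF H_0 wB0] .
    have "0 = D (of_nat M * w)" using w by simp
    also have "\<dots> = of_nat M * D w" using D_mult[OF A_of_nat wA] by simp
    finally show ?thesis using Mnz wA by (simp add: K_def)
  qed
  have wB: "w \<in> Bc (zmul 0 d)" using wB0 by simp
  define trm where "trm j = tf (w * coeff Q j) * tf r' ^ j / tf Fp ^ (N + n)" for j
  have zsum: "z = (\<Sum>j\<le>degree Q. trm j)"
  proof -
    have "tf b = tf w * tf (poly Q r') / tf Fp ^ N"
    proof -
      have "tf (poly Q r') = of_nat M * tf Fp ^ N * tf b" using MNQ(3)[symmetric] by (simp add: Fp_def)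
      moreover have "tf w * of_nat M = 1"
      proof -
        have "tf (of_nat M * w) = 1" using w[symmetric] by simp
        then show ?thesis by (simp add: mult.commute)
      qed
      ultimately show ?thesis using tFpnz by (simp add: field_simps)
    qed
    then have "z = tf w * tf (poly Q r') / tf Fp ^ (N + n)" using bn(2) tFpnz by (simp add: field_simps power_add)
    also have "\<dots> = (\<Sum>j\<le>degree Q. trm j)"
      by (simp add: trm_def poly_altdef tf_sum sum_distrib_left sum_divide_distrib mult.assoc)
    finally show ?thesis .
  qed
  have "trm j \<in> Img" for j
  proof (cases "coeff Q j = 0")
    case True then show ?thesis using Img_0 by (simp add: trm_def)
  next
    case False
    define \<kappa> where "\<kappa> = coeff Q j"
    have "m dvd j"
    proof (rule mdvd)
      show "\<kappa> * Fp ^ j \<in> K" by (rule K_mult[OF QK[of j, folded \<kappa>_def] K_pow[OF FpK]])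
      show "Fp ^ (N + n) \<in> K" by (rule K_pow[OF FpK])
      show "\<kappa> * Fp ^ j \<noteq> 0" using False Fpnz by (simp add: \<kappa>_def)
      show "Fp ^ (N + n) \<noteq> 0" using Fpnz by simp
      show "\<kappa> * Fp ^ j \<in> Bc (zmul (int n * phi + int N * phi - int j * \<rho>' + int j * phi) d)"
        by (rule Bz_mult[OF QB[of j, folded \<kappa>_def] FpnB]) simp
      show "Fp ^ (N + n) \<in> Bc (zmul (int (N + n) * phi) d)" by (rule FpnB)
      show "int n * phi + int N * phi - int j * \<rho>' + int j * phi - int (N + n) * phi = int j * \<epsilon>"
        by (simp add: phi_def algebra_simps)
    qed
    then obtain q where jq: "j = m * q" by blast
    define c where "c = tf (w * \<kappa> * Fp ^ ((m + 1) * q) * u' ^ q) / tf Fp ^ (N + n + 2 * q)"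
    have cR: "c \<in> R0"
    proof (rule R0I[OF _ _ c_def])
      show "w * \<kappa> * Fp ^ ((m + 1) * q) * u' ^ q \<in> K"
        using wK QK[of j] FpK u'K(1) by (simp add: \<kappa>_def K_mult K_pow)
      have mu': "\<mu> = (int m + 1) * phi - int m * \<rho>'" using mu by (simp add: phi_def)
      show "w * \<kappa> * Fp ^ ((m + 1) * q) * u' ^ q \<in> Bc (zmul (int (N + n + 2 * q) * phi) d)"
        apply (rule Bz_mult[OF Bz_mult[OF Bz_mult[OF wB QB[of j, folded \<kappa>_def] refl] FpnB refl] Bz_pow[OF u'K(2)]])
        apply (simp add: jq mu' phi_def algebra_simps)
        done
    qed
    have "trm j = c * t ^ q"
    proof -
      have UV: "tf u ^ q * tf u' ^ q = tf Fp ^ (2 * q)"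
      proof -
        have "tf u ^ q * tf u' ^ q = (tf u * tf u') ^ q" by (rule power_mult_distrib[symmetric])
        also have "tf u * tf u' = tf Fp ^ 2" using uu' by (metis Fp_def tf_mult tf_pow)
        also have "(tf Fp ^ 2) ^ q = tf Fp ^ (2 * q)" by (rule power_mult[symmetric])
        finally show ?thesis .
      qed
      have "c * t ^ q = (tf w * tf \<kappa> * tf Fp ^ ((m + 1) * q) * tf u' ^ q / tf Fp ^ (N + n + 2 * q)) *
          (tf u * tf r' ^ m / tf Fp ^ (m + 1)) ^ q"
        by (simp add: c_def t_def)
      also have "\<dots> = tf w * tf \<kappa> * tf r' ^ (m * q) / tf Fp ^ (N + n)"
        by (rule field_ident[OF tFpnz UV])
      finally show ?thesis by (simp add: trm_def jq \<kappa>_def)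
    qed
    then show ?thesis using Img_monom[OF cR] by simp
  qed
  then have "(\<Sum>j\<le>degree Q. trm j) \<in> Img" by (intro Img_sum) simp_all
  then show "z \<in> Img" using zsum by simp
qed

end


context fin begin

lemma fin_result: "\<exists>f\<in>D ` A. D f = 0 \<and> cylindrical Bc f"
proof (rule bexI[of _ Fp])
  show "Fp \<in> D ` A" using r'A by (simp add: Fp_def)
  have pr: "polynomial_ring_one_var L"
    unfolding polynomial_ring_one_var_def
  proof (intro exI conjI)
    show "is_subring R0" by (rule R0_subring)
    show "R0 \<subseteq> L" by (rule R0_L)
    show "t \<in> L" by (rule t_L)
    show "bij_betw (\<lambda>p. poly p t) {p. \<forall>k. coeff p k \<in> R0} L"
    proof (rule bij_betw_imageI[OF inj_t])
      show "(\<lambda>p. poly p t) ` {p. \<forall>k. coeff p k \<in> R0} = L"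
        using surj_t poly_L unfolding Img_def by blast
    qed
  qed
  have io: "infinite_order (zmul phi d)" using zmul_inf_order[OF dinf] phinz by (simp add: phi_def)
  show "D Fp = 0 \<and> cylindrical Bc Fp"
    unfolding cylindrical_def using FpK Fpnz FpB io pr by (auto simp: K_def L_def)
qed

end

context ld begin

lemma main: assumes ker: "\<exists>x\<in>A. D x = 0 \<and> x \<notin> Bc 0"
  shows "\<exists>f\<in>D ` A. D f = 0 \<and> cylindrical Bc f"
proof -
  obtain \<epsilon> where eps: "e = zmul \<epsilon> d" using H_elim[OF e_H] by blast
  obtain \<rho>0 r where r: "\<rho>0 \<in> H" "r \<in> Bc \<rho>0" "D r \<noteq> 0" "D (D r) = 0" using local_slice by blast
  obtain kr where kr: "\<rho>0 = zmul kr d" using H_elim[OF r(1)] by blast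
  define F where "F = D r"
  have rA: "r \<in> A" using Bc_A r by blast
  have FK: "F \<in> K" using r(4) D_A[OF rA] by (simp add: K_def F_def)
  have Fnz: "F \<noteq> 0" using r(3) by (simp add: F_def)
  define \<phi> where "\<phi> = kr + \<epsilon>"
  have FB: "F \<in> Bc (zmul \<phi> d)" using D_hom[OF r(1,2)] by (simp add: F_def \<phi>_def kr eps zmul_add)
  obtain \<eta>0 h where h: "\<eta>0 \<in> H" "\<eta>0 \<noteq> 0" "h \<in> Bc \<eta>0" "h \<noteq> 0" "D h = 0" using ker_hom[OF ker] by blast
  obtain qh where qh: "\<eta>0 = zmul qh d" using H_elim[OF h(1)] by blast
  have qh0: "qh \<noteq> 0" using h(2) qh by auto
  have hK: "h \<in> K" using h Bc_A by (simp add: K_def)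
  have hB: "h \<in> Bc (zmul qh d)" using h(3) qh by simp
  have oneB: "(1::'b) \<in> Bc (zmul 0 d)" using one_Bc0 by simp
  define S where "S = {a1 - b1 | a1 b1. \<exists>x y. x \<in> K \<and> y \<in> K \<and> x \<noteq> 0 \<and> y \<noteq> 0 \<and>
      x \<in> Bc (zmul a1 d) \<and> y \<in> Bc (zmul b1 d)}"
  have SI: "x \<in> K \<Longrightarrow> y \<in> K \<Longrightarrow> x \<noteq> 0 \<Longrightarrow> y \<noteq> 0 \<Longrightarrow> x \<in> Bc (zmul a1 d) \<Longrightarrow> y \<in> Bc (zmul b1 d)
     \<Longrightarrow> s = a1 - b1 \<Longrightarrow> s \<in> S" for x y a1 b1 s unfolding S_def by blast
  have S0: "0 \<in> S" by (rule SI[OF K_1 K_1 _ _ oneB oneB]) simp_all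
  have Sadd: "s1 + s2 \<in> S" if s12: "s1 \<in> S" "s2 \<in> S" for s1 s2
  proof -
    obtain x1 y1 a1 b1 where 1: "x1 \<in> K" "y1 \<in> K" "x1 \<noteq> 0" "y1 \<noteq> 0" "x1 \<in> Bc (zmul a1 d)" "y1 \<in> Bc (zmul b1 d)" "s1 = a1 - b1"
      using s12(1) unfolding S_def by blast
    obtain x2 y2 a2 b2 where 2: "x2 \<in> K" "y2 \<in> K" "x2 \<noteq> 0" "y2 \<noteq> 0" "x2 \<in> Bc (zmul a2 d)" "y2 \<in> Bc (zmul b2 d)" "s2 = a2 - b2"
      using s12(2) unfolding S_def by blast
    show ?thesis
      by (rule SI[OF K_mult[OF 1(1) 2(1)] K_mult[OF 1(2) 2(2)] _ _ Bz_mult[OF 1(5) 2(5) refl] Bz_mult[OF 1(6) 2(6) refl]])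
        (use 1 2 in simp_all)
  qed
  have Sneg: "- s \<in> S" if s1: "s \<in> S" for s
  proof -
    obtain x1 y1 a1 b1 where 1: "x1 \<in> K" "y1 \<in> K" "x1 \<noteq> 0" "y1 \<noteq> 0" "x1 \<in> Bc (zmul a1 d)" "y1 \<in> Bc (zmul b1 d)" "s = a1 - b1"
      using s1 unfolding S_def by blast
    show ?thesis by (rule SI[OF 1(2) 1(1) 1(4) 1(3) 1(6) 1(5)]) (simp add: 1(7))
  qed
  have Smult: "k * s \<in> S" if "s \<in> S" for k s
  proof (induction k rule: int_induct[where k=0])
    case base then show ?case using S0 by simp
  next
    case (step1 i) then show ?case using Sadd[OF _ that] by (simp add: distrib_right)
  next
    case (step2 i)
    have "(i - 1) * s = i * s + - s" by (simp add: algebra_simps)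
    then show ?case using Sadd[OF step2(2) Sneg[OF that]] by simp
  qed
  have qhS: "qh \<in> S" by (rule SI[OF hK K_1 h(4) _ hB oneB]) simp_all
  define j0 where "j0 = nat \<bar>qh\<bar>"
  have j0: "j0 > 0" "int j0 * \<epsilon> \<in> S"
  proof -
    show "j0 > 0" using qh0 by (simp add: j0_def)
    show "int j0 * \<epsilon> \<in> S"
    proof (cases "qh > 0")
      case True
      then have eq: "int j0 * \<epsilon> = \<epsilon> * qh" by (simp add: j0_def)
      show ?thesis unfolding eq by (rule Smult[OF qhS])
    next
      case False
      then have eq: "int j0 * \<epsilon> = (- \<epsilon>) * qh" by (simp add: j0_def)
      show ?thesis unfolding eq by (rule Smult[OF qhS])
    qed
  qed
  define P where "P n = (n > 0 \<and> int n * \<epsilon> \<in> S)" for n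
  have Pj0: "P j0" using j0 by (simp add: P_def)
  define m where "m = (LEAST n. P n)"
  have Pm: "P m" unfolding m_def by (rule LeastI[of P j0, OF Pj0])
  then have m0: "m > 0" and mS: "int m * \<epsilon> \<in> S" by (simp_all add: P_def)
  have mdvd_S: "m dvd j" if "int j * \<epsilon> \<in> S" for j
  proof (rule ccontr)
    assume nd: "\<not> m dvd j"
    then have r0: "j mod m > 0" by (simp add: mod_greater_zero_iff_not_dvd)
    have rm: "j mod m < m" using m0 by simp
    have "int (j mod m) * \<epsilon> = int j * \<epsilon> + (- int (j div m)) * (int m * \<epsilon>)"
    proof -
      have "j = j div m * m + j mod m" by simp
      then have "int j = int (j div m) * int m + int (j mod m)" by (metis of_nat_add of_nat_mult)
      then show ?thesis by (simp add: algebra_simps)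
    qed
    then have "int (j mod m) * \<epsilon> \<in> S" using Sadd[OF that Smult[OF mS, of "- int (j div m)"]] by (simp only:)
    then have "P (j mod m)" using r0 by (simp add: P_def)
    moreover have "\<not> P (j mod m)" unfolding m_def by (rule not_less_Least) (use rm m_def in simp)
    ultimately show False by blast
  qed
  obtain a b \<alpha> \<beta> where ab: "a \<in> K" "b \<in> K" "a \<noteq> 0" "b \<noteq> 0" "a \<in> Bc (zmul \<alpha> d)" "b \<in> Bc (zmul \<beta> d)"
      "int m * \<epsilon> = \<alpha> - \<beta>"
    using mS unfolding S_def by blast
  obtain h' \<eta>' where h': "h' \<in> K" "h' \<noteq> 0" "h' \<in> Bc (zmul \<eta>' d)" "\<phi> + \<alpha> + \<beta> + \<eta>' \<noteq> 0"
  proof (cases "\<phi> + \<alpha> + \<beta> = 0")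
    case True
    show ?thesis by (rule that[OF hK h(4) hB]) (use True qh0 in simp)
  next
    case False
    show ?thesis by (rule that[OF K_1 _ oneB]) (use False in simp_all)
  qed
  define v where "v = a * b * h'"
  have vK: "v \<in> K" by (simp add: v_def K_mult ab h')
  have vnz: "v \<noteq> 0" using ab h' by (simp add: v_def)
  have vB: "v \<in> Bc (zmul (\<alpha> + \<beta> + \<eta>') d)"
    unfolding v_def by (rule Bz_mult[OF Bz_mult[OF ab(5) ab(6) refl] h'(3) refl])
  define r' where "r' = v * r"
  define \<rho>' where "\<rho>' = \<alpha> + \<beta> + \<eta>' + kr"
  have r'B: "r' \<in> Bc (zmul \<rho>' d)" unfolding r'_def
    by (rule Bz_mult[OF vB r(2)[unfolded kr]]) (simp add: \<rho>'_def)
  have Dr': "D r' = v * F" unfolding r'_def F_def by (rule D_multK[OF vK rA])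
  have DDr': "D (D r') = 0" unfolding Dr' using D_multK[OF vK K_A[OF FK]] K_D[OF FK] by simp
  have Dr'nz: "D r' \<noteq> 0" using Dr' vnz Fnz by simp
  define u where "u = a * (F * a * h')"
  define \<mu> where "\<mu> = \<alpha> + (\<phi> + \<alpha> + \<eta>')"
  define u' where "u' = F * b ^ 2 * h'"
  have uK: "u \<in> K" by (simp add: u_def K_mult ab h' FK)
  have unz: "u \<noteq> 0" using ab h' Fnz by (simp add: u_def)
  have uB: "u \<in> Bc (zmul \<mu> d)" unfolding u_def
    by (rule Bz_mult[OF ab(5) Bz_mult[OF Bz_mult[OF FB ab(5) refl] h'(3) refl]]) (simp add: \<mu>_def)
  have u'K: "u' \<in> K" by (simp add: u'_def K_mult K_pow ab h' FK)
  have u'B: "u' \<in> Bc (zmul (2 * (\<rho>' + \<epsilon>) - \<mu>) d)" unfolding u'_def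
    by (rule Bz_mult[OF Bz_mult[OF FB Bz_pow[OF ab(6)] refl] h'(3)]) (simp add: \<mu>_def \<rho>'_def \<phi>_def algebra_simps)
  have uu': "u * u' = (D r') ^ 2" by (simp add: u_def u'_def Dr' v_def power2_eq_square algebra_simps)
  have mu: "\<mu> + int m * \<rho>' = (int m + 1) * (\<rho>' + \<epsilon>)"
  proof -
    have "(int m + 1) * (\<rho>' + \<epsilon>) = int m * \<rho>' + int m * \<epsilon> + \<rho>' + \<epsilon>" by (simp add: algebra_simps)
    then show ?thesis using ab(7) by (simp add: \<mu>_def \<rho>'_def \<phi>_def)
  qed
  have phinz: "\<rho>' + \<epsilon> \<noteq> 0" using h'(4) by (simp add: \<rho>'_def \<phi>_def algebra_simps)
  have mdvd: "m dvd j" if "x \<in> K" "y \<in> K" "x \<noteq> 0" "y \<noteq> 0" "x \<in> Bc (zmul a1 d)" "y \<in> Bc (zmul b1 d)"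
    "a1 - b1 = int j * \<epsilon>" for j x y a1 b1
    using mdvd_S SI[OF that(1-6) that(7)[symmetric]] by blast
  interpret fin Bc d D e r' \<rho>' \<epsilon> m u u' \<mu>
    by unfold_locales (use eps r'B DDr' Dr'nz phinz m0 uK unz uB u'K u'B uu' mu mdvd in auto)
  show ?thesis by (rule fin_result)
qed

end

theorem corollary4p5:
  fixes Bc :: "'g::ab_group_add \<Rightarrow> 'b::idom set"
    and d :: 'g and D :: "'b \<Rightarrow> 'b"
  assumes graded: "graded_ring Bc"
    and containsQ: "\<forall>n::nat. n \<noteq> 0 \<longrightarrow> (of_nat n :: 'b) dvd 1"
    and d_inf: "infinite_order d"
    and hder: "homogeneous_derivation_on Bc d D"
    and lnd: "locally_nilpotent_on (veronese Bc d) D"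
    and nonzero: "\<exists>x\<in>veronese Bc d. D x \<noteq> 0"
    and ker_not_sub: "\<exists>x\<in>veronese Bc d. D x = 0 \<and> x \<notin> Bc 0"
  shows "\<exists>f\<in>D ` veronese Bc d. D f = 0 \<and> cylindrical Bc f"
proof -
  obtain e where e: "\<forall>i\<in>cyclic_subgroup d. \<forall>x\<in>Bc i. D x \<in> Bc (i + e)"
    using hder unfolding homogeneous_derivation_on_def by blast
  have der: "derivation_on (veronese Bc d) D"
    using hder unfolding homogeneous_derivation_on_def by blast
  interpret ld Bc d D e
    by unfold_locales (fact graded d_inf der e lnd nonzero containsQ)+
  show ?thesis by (rule main[OF ker_not_sub])
qed

end
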